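(* Let $\mathcal N$ be a ReLU net with input dimension $d$, a single hidden layer of width $n$ and output dimension $1$, i.e. $f_{\mathcal N}(x)=\mathrm{ReLU}\big(b+\sum_{j=1}^n c_j\,\mathrm{ReLU}(A_j(x))\big)$ with $A_j:\mathbb{R}^d\to\mathbb{R}$ affine and $b,c_j\in\mathbb{R}$. Then there exists another ReLU net $\widetilde{\mathcal N}$ with input dimension $d$, output dimension $1$ and $n+2$ hidden layers, each of width $d+2$, that computes the same function as $\mathcal N$ on $[0,1]^d$.
   Context: For $m\geq1$, $\mathrm{ReLU}(x_1,\dots,x_m)=(\max\{0,x_1\},\dots,\max\{0,x_m\})$. A feed-forward ReLU net with input dimension $d_{\mathrm{in}}$, hidden layer width $w$, depth $n$ and output dimension $d_{\mathrm{out}}$ is a function of the form $\mathrm{ReLU}\circ A_n\circ\mathrm{ReLU}\circ A_{n-1}\circ\cdots\circ\mathrm{ReLU}\circ A_1$ with $A_1:\mathbb{R}^{d_{\mathrm{in}}}\to\mathbb{R}^w$, $A_j:\mathbb{R}^w\to\mathbb{R}^w$ ($2\leq j\leq n-1$), $A_n:\mathbb{R}^w\to\mathbb{R}^{d_{\mathrm{out}}}$ affine. Throughout, functions computed by nets are considered on the domain $[0,1]^d$. *)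

theory Defs
  imports Main "HOL-Analysis.Analysis"
begin

text \<open>Vectors in R^m are represented as functions nat => real; only the
  coordinates i < m are meaningful (the others are kept at 0 by the maps below).\<close>

type_synonym vec = "nat \<Rightarrow> real"

type_synonym layer = "(nat \<Rightarrow> nat \<Rightarrow> real) \<times> (nat \<Rightarrow> real)"

definition affine_map :: "nat \<Rightarrow> nat \<Rightarrow> layer \<Rightarrow> vec \<Rightarrow> vec" where
  "affine_map m k L x = (\<lambda>i. if i < k then snd L i + (\<Sum>j<m. fst L i j * x j) else 0)"

definition relu_vec :: "nat \<Rightarrow> vec \<Rightarrow> vec" where
  "relu_vec k v = (\<lambda>i. if i < k then max 0 (v i) else 0)"

fun eval_layers :: "nat list \<Rightarrow> layer list \<Rightarrow> vec \<Rightarrow> vec" where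
  "eval_layers (m # k # ds) (L # Ls) x = eval_layers (k # ds) Ls (relu_vec k (affine_map m k L x))"
| "eval_layers _ _ x = x"

text \<open>Dimensions of a net with input dimension din, hidden width w, depth n (n affine maps,
  hence n-1 hidden layers) and output dimension dout.\<close>
definition net_dims :: "nat \<Rightarrow> nat \<Rightarrow> nat \<Rightarrow> nat \<Rightarrow> nat list" where
  "net_dims din w n dout = din # replicate (n - 1) w @ [dout]"

definition is_relu_net :: "nat \<Rightarrow> nat \<Rightarrow> nat \<Rightarrow> nat \<Rightarrow> layer list \<Rightarrow> bool" where
  "is_relu_net din w n dout Ls \<longleftrightarrow> n \<ge> 1 \<and> length Ls = n"

definition net_fun :: "nat \<Rightarrow> nat \<Rightarrow> nat \<Rightarrow> nat \<Rightarrow> layer list \<Rightarrow> vec \<Rightarrow> vec" where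
  "net_fun din w n dout Ls = eval_layers (net_dims din w n dout) Ls"

definition unit_cube :: "nat \<Rightarrow> vec set" where
  "unit_cube d = {x. \<forall>i<d. 0 \<le> x i \<and> x i \<le> 1}"

end

theory Submission
  imports Defs
begin

lemma eval_rep:
  "eval_layers (k # replicate (length Ls) k @ ds) (Ls @ Ls2) x =
   eval_layers (k # ds) Ls2 (foldl (\<lambda>v L. relu_vec k (affine_map k k L v)) x Ls)"
proof (induction Ls arbitrary: x)
  case Nil then show ?case by simp
next
  case (Cons L Ls)
  then show ?case by simp
qed

lemma sum_delta1:
  fixes v :: "nat \<Rightarrow> real"
  assumes "i < m"
  shows "(\<Sum>j<m. (if j = i then 1 else 0) * v j) = v i"
proof -
  have "(\<Sum>j<m. (if j = i then 1 else 0) * v j) = (\<Sum>j<m. if j = i then v j else 0)"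
    by (rule sum.cong) auto
  also have "\<dots> = v i" using assms by (simp add: sum.delta)
  finally show ?thesis .
qed

definition aa :: "nat \<Rightarrow> layer \<Rightarrow> nat \<Rightarrow> vec \<Rightarrow> real" where
  "aa d L1 k x = snd L1 k + (\<Sum>i<d. fst L1 k i * x i)"

definition gg :: "nat \<Rightarrow> layer \<Rightarrow> nat \<Rightarrow> real" where
  "gg n L2 k = (if k < n then fst L2 0 k else 0)"

definition SS :: "nat \<Rightarrow> nat \<Rightarrow> layer \<Rightarrow> layer \<Rightarrow> real \<Rightarrow> nat \<Rightarrow> vec \<Rightarrow> vec" where
  "SS d n L1 L2 C k x = (\<lambda>i. if i < d then x i else if i = d then max 0 (aa d L1 k x)
     else if i = Suc d then C + snd L2 0 + (\<Sum>j<k. gg n L2 j * max 0 (aa d L1 j x)) else 0)"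

definition FL :: "nat \<Rightarrow> layer \<Rightarrow> layer \<Rightarrow> real \<Rightarrow> layer" where
  "FL d L1 L2 C = ((\<lambda>i j. if i < d then (if j = i then 1 else 0) else if i = d then fst L1 0 j else 0),
                   (\<lambda>i. if i < d then 0 else if i = d then snd L1 0 else C + snd L2 0))"

definition MidL :: "nat \<Rightarrow> nat \<Rightarrow> layer \<Rightarrow> layer \<Rightarrow> nat \<Rightarrow> layer" where
  "MidL d n L1 L2 k = ((\<lambda>i j. if i < d then (if j = i then 1 else 0)
        else if i = d then (if j < d then fst L1 (Suc k) j else 0)
        else (if j = Suc d then 1 else if j = d then gg n L2 k else 0)),
     (\<lambda>i. if i = d then snd L1 (Suc k) else 0))"

definition FinL :: "nat \<Rightarrow> real \<Rightarrow> layer" where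
  "FinL d C = ((\<lambda>i j. if j = Suc d then 1 else 0), (\<lambda>i. - C))"

definition BB :: "nat \<Rightarrow> layer \<Rightarrow> nat \<Rightarrow> real" where
  "BB d L1 k = \<bar>snd L1 k\<bar> + (\<Sum>i<d. \<bar>fst L1 k i\<bar>)"

lemma aa_bound:
  assumes "x \<in> unit_cube d"
  shows "\<bar>aa d L1 k x\<bar> \<le> BB d L1 k"
proof -
  have "\<bar>\<Sum>i<d. fst L1 k i * x i\<bar> \<le> (\<Sum>i<d. \<bar>fst L1 k i * x i\<bar>)" by (rule sum_abs)
  also have "\<dots> \<le> (\<Sum>i<d. \<bar>fst L1 k i\<bar>)"
  proof (rule sum_mono)
    fix i assume "i \<in> {..<d}"
    then have "0 \<le> x i" "x i \<le> 1" using assms by (auto simp: unit_cube_def)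
    then show "\<bar>fst L1 k i * x i\<bar> \<le> \<bar>fst L1 k i\<bar>"
      by (simp add: abs_mult mult_left_le)
  qed
  finally show ?thesis unfolding aa_def BB_def by linarith
qed

lemma acc_nonneg:
  assumes "x \<in> unit_cube d"
    and C: "C = \<bar>snd L2 0\<bar> + (\<Sum>j<n. \<bar>gg n L2 j\<bar> * BB d L1 j)"
  shows "0 \<le> C + snd L2 0 + (\<Sum>j<k. gg n L2 j * max 0 (aa d L1 j x))"
proof -
  have "- (\<Sum>j<k. gg n L2 j * max 0 (aa d L1 j x)) \<le> (\<Sum>j<k. \<bar>gg n L2 j * max 0 (aa d L1 j x)\<bar>)"
    using sum_abs[of "\<lambda>j. gg n L2 j * max 0 (aa d L1 j x)" "{..<k}"] by linarith
  also have "\<dots> \<le> (\<Sum>j<k. \<bar>gg n L2 j\<bar> * BB d L1 j)"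
  proof (rule sum_mono)
    fix j
    have "\<bar>max 0 (aa d L1 j x)\<bar> \<le> BB d L1 j" using aa_bound[OF assms(1), of L1 j] by (simp add: abs_le_iff max_def)
    then show "\<bar>gg n L2 j * max 0 (aa d L1 j x)\<bar> \<le> \<bar>gg n L2 j\<bar> * BB d L1 j"
      by (simp add: abs_mult mult_left_mono)
  qed
  also have "\<dots> = (\<Sum>j\<in>{..<k} \<inter> {..<n}. \<bar>gg n L2 j\<bar> * BB d L1 j)"
    by (rule sum.mono_neutral_right) (auto simp: gg_def)
  also have "\<dots> \<le> (\<Sum>j<n. \<bar>gg n L2 j\<bar> * BB d L1 j)"
  proof (rule sum_mono2)
    show "\<And>b. b \<in> {..<n} - {..<k} \<inter> {..<n} \<Longrightarrow> 0 \<le> \<bar>gg n L2 b\<bar> * BB d L1 b"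
      unfolding BB_def by (simp add: sum_nonneg)
  qed auto
  finally show ?thesis using C by linarith
qed

lemma first_step:
  assumes "x \<in> unit_cube d" and "0 \<le> C + snd L2 0"
  shows "relu_vec (d+2) (affine_map d (d+2) (FL d L1 L2 C) x) = SS d n L1 L2 C 0 x"
proof
  fix i
  show "relu_vec (d+2) (affine_map d (d+2) (FL d L1 L2 C) x) i = SS d n L1 L2 C 0 x i"
  proof (cases "i < d")
    case True
    then have "0 \<le> x i" using assms by (auto simp: unit_cube_def)
    then show ?thesis using True
      by (simp add: relu_vec_def affine_map_def FL_def SS_def sum_delta1)
  next
    case False
    then show ?thesis using assms(2)
      by (auto simp: relu_vec_def affine_map_def FL_def SS_def aa_def)
  qed
qed


lemma mid_step:
  assumes "x \<in> unit_cube d"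
    and nn: "0 \<le> C + snd L2 0 + (\<Sum>j<Suc k. gg n L2 j * max 0 (aa d L1 j x))"
  shows "relu_vec (d+2) (affine_map (d+2) (d+2) (MidL d n L1 L2 k) (SS d n L1 L2 C k x))
         = SS d n L1 L2 C (Suc k) x"
proof
  fix i
  let ?S = "SS d n L1 L2 C k x"
  have dd: "d + 2 = Suc (Suc d)" by simp
  show "relu_vec (d+2) (affine_map (d+2) (d+2) (MidL d n L1 L2 k) ?S) i = SS d n L1 L2 C (Suc k) x i"
  proof (cases "i < d")
    case True
    then have "0 \<le> x i" using assms by (auto simp: unit_cube_def)
    moreover have "(\<Sum>j<d+2. (if j = i then 1 else 0) * ?S j) = ?S i"
      using True by (intro sum_delta1) simp
    ultimately show ?thesis using True
      by (simp add: relu_vec_def affine_map_def MidL_def SS_def)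
  next
    case False
    note F = False
    show ?thesis
    proof (cases "i = d")
      case True
      have "(\<Sum>j<d+2. (if j < d then fst L1 (Suc k) j else 0) * ?S j)
          = (\<Sum>j<d. fst L1 (Suc k) j * x j)"
        unfolding dd by (simp add: SS_def)
      then show ?thesis using True
        by (simp add: relu_vec_def affine_map_def MidL_def SS_def aa_def)
    next
      case False
      show ?thesis
      proof (cases "i = Suc d")
        case True
        have "(\<Sum>j<d+2. (if j = Suc d then 1 else if j = d then gg n L2 k else 0) * ?S j)
            = ?S (Suc d) + gg n L2 k * ?S d"
          unfolding dd by (simp add: SS_def)
        then show ?thesis using True nn
          by (simp add: relu_vec_def affine_map_def MidL_def SS_def algebra_simps)
      next
        case False
        then show ?thesis using F \<open>i \<noteq> d\<close>
          by (simp add: relu_vec_def affine_map_def MidL_def SS_def)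
      qed
    qed
  qed
qed

lemma mids:
  assumes "x \<in> unit_cube d"
    and C: "C = \<bar>snd L2 0\<bar> + (\<Sum>j<n. \<bar>gg n L2 j\<bar> * BB d L1 j)"
  shows "foldl (\<lambda>v L. relu_vec (d+2) (affine_map (d+2) (d+2) L v)) (SS d n L1 L2 C 0 x)
           (map (MidL d n L1 L2) [0..<r]) = SS d n L1 L2 C r x"
proof (induction r)
  case 0 then show ?case by simp
next
  case (Suc r)
  then show ?case using mid_step[OF assms(1) acc_nonneg[OF assms]] by simp
qed


theorem lemma3:
  fixes d n :: nat and N :: "layer list"
  assumes "is_relu_net d n 2 1 N"
  shows "\<exists>N'. is_relu_net d (d + 2) (n + 3) 1 N' \<and>
           (\<forall>x \<in> unit_cube d. net_fun d (d + 2) (n + 3) 1 N' x = net_fun d n 2 1 N x)"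
proof -
  from assms have "length N = 2" by (simp add: is_relu_net_def)
  then obtain L1 L2 where N: "N = [L1, L2]"
    by (metis (no_types, opaque_lifting) One_nat_def Suc_1 length_0_conv length_Suc_conv)
  define C where "C = \<bar>snd L2 0\<bar> + (\<Sum>j<n. \<bar>gg n L2 j\<bar> * BB d L1 j)"
  define N' where "N' = FL d L1 L2 C # map (MidL d n L1 L2) [0..<Suc n] @ [FinL d C]"
  have "is_relu_net d (d + 2) (n + 3) 1 N'" by (simp add: is_relu_net_def N'_def)
  moreover have "net_fun d (d + 2) (n + 3) 1 N' x = net_fun d n 2 1 N x" if x: "x \<in> unit_cube d" for x
  proof -
    have dims: "net_dims d (d + 2) (n + 3) 1 = d # (d+2) # replicate (length (map (MidL d n L1 L2) [0..<Suc n])) (d+2) @ [1]"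
      by (simp add: net_dims_def numeral_3_eq_3)
    have nn0: "0 \<le> C + snd L2 0" using acc_nonneg[OF x C_def, of 0] by simp
    have "net_fun d (d + 2) (n + 3) 1 N' x =
        eval_layers ((d+2) # replicate (length (map (MidL d n L1 L2) [0..<Suc n])) (d+2) @ [1])
          (map (MidL d n L1 L2) [0..<Suc n] @ [FinL d C]) (SS d n L1 L2 C 0 x)"
      unfolding net_fun_def dims N'_def using first_step[OF x nn0] by simp
    also have "\<dots> = eval_layers [d+2, 1] [FinL d C] (SS d n L1 L2 C (Suc n) x)"
      unfolding eval_rep mids[OF x C_def] by simp
    also have "\<dots> = relu_vec 1 (affine_map (d+2) 1 (FinL d C) (SS d n L1 L2 C (Suc n) x))"
      by simp
    also have "\<dots> = net_fun d n 2 1 N x"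
    proof
      fix i
      have dd: "d + 2 = Suc (Suc d)" by simp
      have s1: "(\<Sum>j<d+2. (if j = Suc d then 1 else 0) * SS d n L1 L2 C (Suc n) x j)
          = SS d n L1 L2 C (Suc n) x (Suc d)"
        by (rule sum_delta1) simp
      have s2: "(\<Sum>j<Suc n. gg n L2 j * max 0 (aa d L1 j x)) = (\<Sum>j<n. fst L2 0 j * max 0 (aa d L1 j x))"
        by (simp add: gg_def)
      have s3: "(\<Sum>j<n. fst L2 0 j * relu_vec n (affine_map d n L1 x) j)
           = (\<Sum>j<n. fst L2 0 j * max 0 (aa d L1 j x))"
        by (rule sum.cong) (auto simp: relu_vec_def affine_map_def aa_def)
      show "relu_vec 1 (affine_map (d+2) 1 (FinL d C) (SS d n L1 L2 C (Suc n) x)) i = net_fun d n 2 1 N x i"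
        using s1 s2 s3
        by (simp add: N net_fun_def net_dims_def relu_vec_def affine_map_def FinL_def SS_def numeral_2_eq_2)
    qed
    finally show ?thesis .
  qed
  ultimately show ?thesis by blast
qed

end
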